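(* Let $L\ge1$ be an integer and $h(x)=\mathrm{sech}\big((2L+1)\,\mathrm{arcsech}(x)\big)$. For $\epsilon\ll1$ (i.e. as $\epsilon\to0^+$), the larger solution $x_2\in(0,1)$ of the equation $h(x)+\epsilon=x$ satisfies $$x_2=1-\frac{1}{4(L^2+L)}\epsilon+\mathcal{O}(\epsilon^2).$$ *)

theory Defs
  imports Complex_Main "HOL-Library.Landau_Symbols"
begin

definition sech :: "real \<Rightarrow> real" where
  "sech y = 1 / cosh y"

definition arcsech :: "real \<Rightarrow> real" where
  "arcsech x = ln ((1 + sqrt (1 - x\<^sup>2)) / x)"

definition hfun :: "nat \<Rightarrow> real \<Rightarrow> real" where
  "hfun L x = sech ((2 * real L + 1) * arcsech x)"

definition sols :: "nat \<Rightarrow> real \<Rightarrow> real set" where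
  "sols L eps = {x. 0 < x \<and> x < 1 \<and> hfun L x + eps = x}"

end

theory Submission imports Defs "HOL-Real_Asymp.Real_Asymp" begin

definition phi :: "real \<Rightarrow> real \<Rightarrow> real" where
  "phi n t = 1 / cosh t - 1 / cosh (n * t)"

definition dphi :: "real \<Rightarrow> real \<Rightarrow> real" where
  "dphi n t = n * sinh (n * t) / cosh (n * t) ^ 2 - sinh t / cosh t ^ 2"

lemma phi_deriv: "(phi n has_real_derivative dphi n t) (at t)"
  unfolding phi_def dphi_def
  by (rule derivative_eq_intros refl | simp)+ (simp add: power2_eq_square)

lemma phi_cont: "continuous_on S (phi n)"
  unfolding phi_def by (auto intro!: continuous_intros)

lemma phi_pos: assumes "n > 1" "t > 0" shows "phi n t > 0"
proof -
  have "cosh t < cosh (n * t)"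
    using assms by (subst cosh_real_nonneg_less_iff) auto
  then show ?thesis unfolding phi_def
    by (simp add: frac_less2)
qed

lemma arcsech_sech: assumes "t \<ge> 0" shows "arcsech (1 / cosh t) = t"
proof -
  have c: "cosh t ^ 2 = sinh t ^ 2 + 1" by (rule cosh_square_eq)
  have "(sinh t / cosh t)\<^sup>2 = (cosh t ^ 2 - 1) / cosh t ^ 2"
    using c by (simp add: power_divide)
  also have "\<dots> = 1 - (1 / cosh t)\<^sup>2"
    by (simp add: diff_divide_distrib power_divide)
  finally have "1 - (1 / cosh t)\<^sup>2 = (sinh t / cosh t)\<^sup>2" by simp
  then have "sqrt (1 - (1 / cosh t)\<^sup>2) = sinh t / cosh t"
    using assms by simp
  then have "(1 + sqrt (1 - (1 / cosh t)\<^sup>2)) / (1 / cosh t) = cosh t + sinh t"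
    by (simp add: field_simps)
  then show ?thesis unfolding arcsech_def by (simp add: cosh_plus_sinh)
qed

lemma sols_eq:
  "sols L eps = (\<lambda>t. 1 / cosh t) ` {t. 0 < t \<and> phi (2 * real L + 1) t = eps}"
proof (intro equalityI subsetI)
  fix x assume "x \<in> sols L eps"
  then have x: "0 < x" "x < 1" "hfun L x + eps = x" by (auto simp: sols_def)
  define t where "t = arcosh (1 / x)"
  have "1 / x > 1" using x by simp
  then have t: "t > 0" "cosh t = 1 / x" unfolding t_def by auto
  then have xt: "x = 1 / cosh t" by simp
  have "hfun L x = 1 / cosh ((2 * real L + 1) * t)"
    unfolding hfun_def sech_def xt using arcsech_sech[of t] t by simp
  then have "phi (2 * real L + 1) t = eps" using x xt unfolding phi_def by simp
  then show "x \<in> (\<lambda>t. 1 / cosh t) ` {t. 0 < t \<and> phi (2 * real L + 1) t = eps}"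
    using t xt by auto
next
  fix x assume "x \<in> (\<lambda>t. 1 / cosh t) ` {t. 0 < t \<and> phi (2 * real L + 1) t = eps}"
  then obtain t where t: "t > 0" "phi (2 * real L + 1) t = eps" and xt: "x = 1 / cosh t" by auto
  have "cosh 0 < cosh t" using t by (subst cosh_real_nonneg_less_iff) auto
  then have "x < 1" "0 < x" using xt by auto
  moreover have "hfun L x = 1 / cosh ((2 * real L + 1) * t)"
    unfolding hfun_def sech_def xt using arcsech_sech[of t] t by simp
  ultimately show "x \<in> sols L eps" using t xt unfolding sols_def phi_def by auto
qed

lemma lim1: assumes "n > (1::real)" shows "((\<lambda>t. dphi n t / t) \<longlongrightarrow> n*n - 1) (at_right 0)"
  using assms unfolding dphi_def by real_asymp
lemma lim2: assumes "n > (1::real)" shows "((\<lambda>t. phi n t / t^2) \<longlongrightarrow> (n*n - 1)/2) (at_right 0)"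
  using assms unfolding phi_def by real_asymp
lemma lim3: assumes "n > (1::real)" shows "(phi n \<longlongrightarrow> 0) at_top"
  using assms unfolding phi_def by real_asymp
lemma ev3: assumes "n > (1::real)" shows "\<forall>\<^sub>F t in at_top. dphi n t < 0"
  using assms unfolding dphi_def by real_asymp
lemma bigE4: assumes "n > (1::real)"
  shows "(\<lambda>t. (n*n-1)*(1 - 1/cosh t) - phi n t) \<in> O[at_right 0](\<lambda>t. t^4)"
  using assms unfolding phi_def by real_asymp
lemma sqrt0: "((\<lambda>x::real. sqrt x) \<longlongrightarrow> 0) (at_right 0)"
  by real_asymp


lemma key:
  assumes n2: "n \<ge> (2::real)"
  obtains a B m where "0 < a" "a < B" "0 < m"
    "\<And>t. 0 < t \<Longrightarrow> t \<le> a \<Longrightarrow> t^2 < phi n t"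
    "\<And>eps. 0 < eps \<Longrightarrow> eps < m \<Longrightarrow> \<exists>t1 t2. 0 < t1 \<and> t1 < a \<and> B < t2 \<and>
        {t. 0 < t \<and> phi n t = eps} = {t1, t2}"
proof -
  have n: "n > 1" using n2 by simp
  have nn: "n*n \<ge> 2*2" using n2 by (intro mult_mono) auto
  have e1: "\<forall>\<^sub>F t in at_right 0. dphi n t / t > 0"
    using order_tendstoD(1)[OF lim1[OF n], of 0] nn by simp
  have e2: "\<forall>\<^sub>F t in at_right 0. phi n t / t^2 > 1"
    using order_tendstoD(1)[OF lim2[OF n], of 1] nn by simp
  have "\<forall>\<^sub>F t in at_right 0. dphi n t / t > 0 \<and> phi n t / t^2 > 1 \<and> t > 0"
    using eventually_conj[OF e1 eventually_conj[OF e2 eventually_at_right_less]] by simp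
  then obtain b where b: "b > 0" "\<And>t. 0 < t \<Longrightarrow> t < b \<Longrightarrow> dphi n t / t > 0 \<and> phi n t / t^2 > 1"
    unfolding eventually_at_right_field by auto
  define a where "a = b / 2"
  have a: "0 < a" "a < b" using b by (auto simp: a_def)
  have da: "dphi n t > 0" if "0 < t" "t \<le> a" for t
    using b(2)[of t] that a by (auto simp: zero_less_divide_iff)
  have pa: "t^2 < phi n t" if "0 < t" "t \<le> a" for t
    using b(2)[of t] that a by (auto simp: less_divide_eq)
  obtain N where N: "\<And>t. t \<ge> N \<Longrightarrow> dphi n t < 0"
    using ev3[OF n] unfolding eventually_at_top_linorder by auto
  define B where "B = max N (a + 1)"
  have B: "a < B" "\<And>t. t \<ge> B \<Longrightarrow> dphi n t < 0" using N by (auto simp: B_def)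
  have mono1: "phi n s < phi n t" if "0 \<le> s" "s < t" "t \<le> a" for s t
    by (rule DERIV_pos_imp_increasing_open[OF that(2)])
       (use that phi_deriv da phi_cont in \<open>force+\<close>)
  have mono2: "phi n t < phi n s" if "B \<le> s" "s < t" for s t
    by (rule DERIV_neg_imp_decreasing_open[OF that(2)])
       (use that phi_deriv B phi_cont in \<open>force+\<close>)
  obtain x0 where x0: "x0 \<in> {a..B}" "\<And>y. y \<in> {a..B} \<Longrightarrow> phi n x0 \<le> phi n y"
    using continuous_attains_inf[of "{a..B}" "phi n"] B phi_cont by auto
  define m where "m = phi n x0"
  have m: "m > 0" unfolding m_def using x0 a phi_pos[OF n] by auto
  have "\<exists>t1 t2. 0 < t1 \<and> t1 < a \<and> B < t2 \<and> {t. 0 < t \<and> phi n t = eps} = {t1, t2}"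
    if e: "0 < eps" "eps < m" for eps
  proof -
    have p0: "phi n 0 = 0" by (simp add: phi_def)
    have "m \<le> phi n a" using x0 B a unfolding m_def by auto
    then obtain t1 where t1: "0 \<le> t1" "t1 \<le> a" "phi n t1 = eps"
      using IVT'[of "phi n" 0 eps a] e p0 a phi_cont by auto
    have t1': "0 < t1" "t1 < a" using t1 e p0 \<open>m \<le> phi n a\<close>
      by (metis less_irrefl order.order_iff_strict, metis order.not_eq_order_implies_strict not_le)
    obtain C where C: "\<And>t. t \<ge> C \<Longrightarrow> phi n t < eps"
      using order_tendstoD(2)[OF lim3[OF n] e(1)] unfolding eventually_at_top_linorder by auto
    define C' where "C' = max C (B + 1)"
    have "m \<le> phi n B" using x0 B a unfolding m_def by auto
    moreover have "phi n C' < eps" using C by (auto simp: C'_def)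
    ultimately have "\<exists>x. B \<le> x \<and> x \<le> C' \<and> phi n x = eps"
      using e by (intro IVT2' phi_cont) (auto simp: C'_def)
    then obtain t2 where t2: "B \<le> t2" "t2 \<le> C'" "phi n t2 = eps" by blast
    have t2': "B < t2" using t2 e \<open>m \<le> phi n B\<close> by (cases "B = t2") auto
    have "{t. 0 < t \<and> phi n t = eps} = {t1, t2}"
    proof (intro equalityI subsetI)
      fix t assume t: "t \<in> {t. 0 < t \<and> phi n t = eps}"
      consider "t \<le> a" | "a \<le> t" "t \<le> B" | "B \<le> t" by linarith
      then show "t \<in> {t1, t2}"
      proof cases
        case 1 then show ?thesis using t t1 t1' mono1[of t t1] mono1[of t1 t]
          by (cases t t1 rule: linorder_cases) auto
      next
        case 2 then show ?thesis using t x0(2)[of t] e unfolding m_def by auto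
      next
        case 3 then show ?thesis using t t2 t2' mono2[of t t2] mono2[of t2 t]
          by (cases t t2 rule: linorder_cases) auto
      qed
    next
      fix t assume "t \<in> {t1, t2}"
      then show "t \<in> {t. 0 < t \<and> phi n t = eps}" using t1 t1' t2 t2' a B(1) by auto
    qed
    then show ?thesis using t1' t2' by blast
  qed
  then show ?thesis using that[OF a(1) B(1) m pa] by blast
qed


theorem proposition4:
  fixes L :: nat
  assumes "L \<ge> 1"
  shows "(\<forall>\<^sub>F eps in at_right 0. card (sols L eps) = 2)
    \<and> (\<lambda>eps. Max (sols L eps) - (1 - eps / (4 * (real L ^ 2 + real L))))
        \<in> O[at_right 0](\<lambda>eps. eps ^ 2)"
proof -
  define n where "n = 2 * real L + 1"
  have n2: "n \<ge> 2" using assms by (simp add: n_def)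
  have n1: "n > 1" using n2 by simp
  have nn: "n*n \<ge> 2*2" using n2 by (intro mult_mono) auto
  have nL: "4 * (real L ^ 2 + real L) = n*n - 1" by (simp add: n_def algebra_simps power2_eq_square)
  obtain a B m where aBm: "0 < a" "a < B" "0 < m"
    and pa: "\<And>t. 0 < t \<Longrightarrow> t \<le> a \<Longrightarrow> t^2 < phi n t"
    and k: "\<And>eps. 0 < eps \<Longrightarrow> eps < m \<Longrightarrow> \<exists>t1 t2. 0 < t1 \<and> t1 < a \<and> B < t2 \<and>
        {t. 0 < t \<and> phi n t = eps} = {t1, t2}"
    using key[OF n2] by blast
  define T where "T eps = (SOME t. 0 < t \<and> t < a \<and> phi n t = eps)" for eps
  have "\<forall>\<^sub>F eps in at_right 0. 0 < eps \<and> eps < m"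
    using aBm unfolding eventually_at_right_field by auto
  then have ev: "\<forall>\<^sub>F eps in at_right 0. card (sols L eps) = 2 \<and> Max (sols L eps) = 1 / cosh (T eps)
      \<and> 0 < T eps \<and> T eps ^ 2 < eps \<and> phi n (T eps) = eps"
  proof (rule eventually_mono)
    fix eps assume e: "0 < eps \<and> eps < m"
    then obtain t1 t2 where tt: "0 < t1" "t1 < a" "B < t2"
      and S: "{t. 0 < t \<and> phi n t = eps} = {t1, t2}" using k by blast
    have p1: "phi n t1 = eps" using S by blast
    have Tp: "0 < T eps \<and> T eps < a \<and> phi n (T eps) = eps" unfolding T_def
      by (rule someI[of _ t1]) (use tt p1 in auto)
    then have "T eps \<in> {t1, t2}" using S by blast
    then have Tt: "T eps = t1" using Tp tt aBm by auto
    have sl: "sols L eps = {1 / cosh t1, 1 / cosh t2}"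
      using sols_eq[of L eps] S unfolding n_def by simp
    have "cosh t1 < cosh t2" using tt aBm by (subst cosh_real_nonneg_less_iff) auto
    then have lt: "1 / cosh t2 < 1 / cosh t1" by (simp add: frac_less2)
    have "card (sols L eps) = 2" using sl lt by (metis card_2_iff less_irrefl)
    moreover have "Max (sols L eps) = 1 / cosh t1" using sl lt by (simp add: max_def)
    moreover have "T eps ^ 2 < eps" using pa[of "T eps"] Tp by auto
    ultimately show "card (sols L eps) = 2 \<and> Max (sols L eps) = 1 / cosh (T eps)
      \<and> 0 < T eps \<and> T eps ^ 2 < eps \<and> phi n (T eps) = eps" using Tt Tp by simp
  qed
  have part1: "\<forall>\<^sub>F eps in at_right 0. card (sols L eps) = 2"
    using ev by (rule eventually_mono) simp
  have T0: "(T \<longlongrightarrow> 0) (at_right 0)"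
  proof (rule tendsto_sandwich[of "\<lambda>_. 0" T _ sqrt])
    show "\<forall>\<^sub>F eps in at_right 0. 0 \<le> T eps" using ev by (rule eventually_mono) simp
    show "\<forall>\<^sub>F eps in at_right 0. T eps \<le> sqrt eps" using ev
      by (rule eventually_mono) (auto intro: real_le_rsqrt)
  qed (auto simp: sqrt0)
  have Tlim: "filterlim T (at_right 0) (at_right 0)"
    unfolding filterlim_at using T0 ev by (auto elim: eventually_mono)
  have E: "(\<lambda>eps. (n*n-1)*(1 - 1/cosh (T eps)) - phi n (T eps)) \<in> O[at_right 0](\<lambda>eps. T eps ^ 4)"
    using landau_o.big.compose[OF bigE4[OF n1] Tlim] .
  have T4: "(\<lambda>eps. T eps ^ 4) \<in> O[at_right 0](\<lambda>eps. eps ^ 2)"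
  proof (rule landau_o.bigI[of 1])
    show "\<forall>\<^sub>F eps in at_right 0. norm (T eps ^ 4) \<le> 1 * norm (eps ^ 2)" using ev
    proof (rule eventually_mono)
      fix eps assume h: "card (sols L eps) = 2 \<and> Max (sols L eps) = 1 / cosh (T eps)
      \<and> 0 < T eps \<and> T eps ^ 2 < eps \<and> phi n (T eps) = eps"
      have "(T eps ^ 2) ^ 2 \<le> eps ^ 2" using h by (intro power_mono) auto
      then show "norm (T eps ^ 4) \<le> 1 * norm (eps ^ 2)" by (simp add: power_mult[symmetric])
    qed
  qed simp
  have eq: "\<forall>\<^sub>F eps in at_right 0. (-1/(n*n-1)) * ((n*n-1)*(1 - 1/cosh (T eps)) - phi n (T eps))
      = Max (sols L eps) - (1 - eps / (4 * (real L ^ 2 + real L)))"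
    using ev
  proof (rule eventually_mono)
    fix eps assume h: "card (sols L eps) = 2 \<and> Max (sols L eps) = 1 / cosh (T eps)
      \<and> 0 < T eps \<and> T eps ^ 2 < eps \<and> phi n (T eps) = eps"
    have "n*n - 1 \<noteq> 0" using nn by simp
    then show "(-1/(n*n-1)) * ((n*n-1)*(1 - 1/cosh (T eps)) - phi n (T eps))
      = Max (sols L eps) - (1 - eps / (4 * (real L ^ 2 + real L)))"
      using h unfolding nL by (simp add: field_simps)
  qed
  have "n*n - 1 \<noteq> 0" using nn by simp
  then have "(\<lambda>eps. (-1/(n*n-1)) * ((n*n-1)*(1 - 1/cosh (T eps)) - phi n (T eps)))
      \<in> O[at_right 0](\<lambda>eps. eps ^ 2)"
    using landau_o.big_trans[OF E T4] by simp
  then have "(\<lambda>eps. Max (sols L eps) - (1 - eps / (4 * (real L ^ 2 + real L))))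
        \<in> O[at_right 0](\<lambda>eps. eps ^ 2)"
    using landau_o.big.in_cong[OF eq] by simp
  then show ?thesis using part1 by simp
qed

end
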